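(* Let $M$ be a finite set with $|M|=m$ and let $\mu$ be a probability distribution on the power set $\mathcal{P}(M)$. For $k\in\mathbb{N}$ let $S_1,\dots,S_k$ be independent random subsets of $M$, each with $\Pr[S_i=X]=\mu(\{X\})$ for $X\subseteq M$, and let $F^k_\ell$ denote the event $|\bigcap_{i=1}^k S_i|\ge\ell$. For $X\subseteq M$ let $X^\uparrow=\{Y\subseteq M: X\subseteq Y\}$, let $\mathcal{M}_\ell=\{X\subseteq M:|X|=\ell\}$, and let $A_\ell$ be the multiset $\{\mu(X^\uparrow): X\in\mathcal{M}_\ell\}$ for $\ell\in\{0,1,\dots,m\}$. Then the values $\Pr[F^k_\ell]$ for $\ell\in\{0,\dots,m\}$ and $k\in\{1,\dots,\binom{m}{\ell}\}$ continuously determine the multisets $A_\ell$ for all $\ell\in\{0,\dots,m\}$. That is, for every probability distribution $\mu$ on $\mathcal{P}(M)$ and every $\varepsilon>0$ there is $\delta>0$ such that for every probability distribution $\mu'$ on $\mathcal{P}(M)$ satisfying $|\Pr_{\mu}[F^k_\ell]-\Pr_{\mu'}[F^k_\ell]|\le\delta$ for all $\ell\in\{0,\dots,m\}$ and $k\in\{1,\dots,\binom{m}{\ell}\}$, there exist, for each $\ell$, a bijection $\pi_\ell:\mathcal{M}_\ell\to\mathcal{M}_\ell$ with $|\mu(X^\uparrow)-\mu'(\pi_\ell(X)^\uparrow)|\le\varepsilon$ for all $X\in\mathcal{M}_\ell$ (where $\Pr_{\mu}$, $\Pr_{\mu'}$ denote the probabilities computed with $S_i$ distributed according to $\mu$,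 resp. $\mu'$). In particular, if $\Pr_\mu[F^k_\ell]=\Pr_{\mu'}[F^k_\ell]$ for all such $\ell,k$, then the multisets $A_\ell$ computed from $\mu$ and from $\mu'$ coincide for every $\ell$. *)

theory Defs
  imports "HOL-Probability.Probability"
begin

text \<open>A probability distribution on the power set of M: a pmf on sets supported on Pow M.\<close>

definition PrF :: "'a set pmf \<Rightarrow> nat \<Rightarrow> nat \<Rightarrow> real" where
  "PrF \<mu> k l = measure_pmf.prob (Pi_pmf {1..k} {} (\<lambda>_. \<mu>))
                 {S. l \<le> card (\<Inter>i\<in>{1..k}. S i)}"

definition up_mass :: "'a set \<Rightarrow> 'a set pmf \<Rightarrow> 'a set \<Rightarrow> real" where
  "up_mass M \<mu> X = measure_pmf.prob \<mu> {Y. Y \<subseteq> M \<and> X \<subseteq> Y}"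

definition level_sets :: "'a set \<Rightarrow> nat \<Rightarrow> 'a set set" where
  "level_sets M l = {X. X \<subseteq> M \<and> card X = l}"

end

theory Submission
  imports Defs "HOL-Computational_Algebra.Polynomial_FPS"
begin


definition Fp :: "real multiset \<Rightarrow> real poly" where
  "Fp A = prod_mset (image_mset (\<lambda>a. [:1, -a:]) A)"

definition Qs :: "real multiset \<Rightarrow> real fps" where
  "Qs A = Abs_fps (\<lambda>k. if k = 0 then 0 else sum_mset (image_mset (\<lambda>a. a^k) A))"

lemma geo_aux: "fps_const a * fps_X = (1 + fps_const (-a) * fps_X) * Abs_fps (\<lambda>k. if k = 0 then 0 else (a::real)^k)"
proof (rule fps_ext)
  fix n
  show "fps_nth (fps_const a * fps_X) n = fps_nth ((1 + fps_const (-a) * fps_X) * Abs_fps (\<lambda>k. if k = 0 then 0 else (a::real)^k)) n"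
    by (cases n) (auto simp: algebra_simps fps_X_mult_nth distrib_right mult.assoc)
qed

lemma Qs_add: "Qs (add_mset a A) = Abs_fps (\<lambda>k. if k = 0 then 0 else a^k) + Qs A"
  by (rule fps_ext) (simp add: Qs_def)

lemma newton_fps: "fps_X * fps_deriv (fps_of_poly (Fp A)) = - fps_of_poly (Fp A) * Qs A"
proof (induction A)
  case empty
  then show ?case by (simp add: Fp_def Qs_def fps_ext)
next
  case (add a A)
  define G where "G = fps_of_poly (Fp A)"
  define q where "q = Abs_fps (\<lambda>k. if k = 0 then 0 else a^k)"
  define L where "L = (1 + fps_const (-a) * fps_X :: real fps)"
  have FL: "fps_of_poly (Fp (add_mset a A)) = L * G"
    by (simp add: Fp_def G_def L_def fps_of_poly_mult fps_of_poly_linear')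
  have dL: "fps_deriv L = fps_const (-a)" by (simp add: L_def)
  have IH: "fps_X * fps_deriv G = - G * Qs A" using add.IH by (simp add: G_def)
  have g: "fps_const a * fps_X = L * q" using geo_aux[of a] by (simp add: L_def q_def)
  have na: "fps_const (-a) = - fps_const a" by simp
  have "fps_X * fps_deriv (L * G) = - (fps_const a * fps_X) * G + L * (fps_X * fps_deriv G)"
    by (simp add: dL algebra_simps na del: fps_const_neg)
  also have "\<dots> = - (fps_const a * fps_X) * G - L * G * Qs A" by (simp add: IH algebra_simps del: fps_const_neg)
  also have "\<dots> = - (L * G) * (q + Qs A)" by (simp only: g) (simp add: algebra_simps del: fps_const_neg)
  finally show ?case by (simp add: FL Qs_add q_def)
qed

lemma degree_Fp: "degree (Fp A) \<le> size A"
proof (induction A)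
  case empty then show ?case by (simp add: Fp_def)
next
  case (add a A)
  have "degree (Fp (add_mset a A)) = degree ([:1, -a:] * Fp A)" by (simp add: Fp_def)
  also have "\<dots> \<le> degree [:1, -a:] + degree (Fp A)" by (rule degree_mult_le)
  also have "\<dots> \<le> 1 + size A" using add.IH by simp
  finally show ?case by simp
qed

lemma coeff0_Fp: "coeff (Fp A) 0 = 1"
  by (induction A) (simp_all add: Fp_def coeff_mult)

lemma newton_coeff:
  "of_nat n * coeff (Fp A) n = - (\<Sum>i=0..n. coeff (Fp A) i * fps_nth (Qs A) (n-i))"
proof -
  have "fps_nth (fps_X * fps_deriv (fps_of_poly (Fp A))) n = fps_nth (- fps_of_poly (Fp A) * Qs A) n"
    by (simp only: newton_fps)
  moreover have "fps_nth (fps_X * fps_deriv (fps_of_poly (Fp A))) n = of_nat n * coeff (Fp A) n"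
    by (cases n) (simp_all add: fps_X_mult_nth)
  moreover have "fps_nth (- fps_of_poly (Fp A) * Qs A) n = - (\<Sum>i=0..n. coeff (Fp A) i * fps_nth (Qs A) (n-i))"
    by (simp add: fps_mult_nth sum_negf)
  ultimately show ?thesis by simp
qed

lemma Fp_eq_from_power_sums:
  assumes "size A = size B" and "\<forall>k\<in>{1..size A}. (\<Sum>a\<in>#A. a^k) = (\<Sum>b\<in>#B. b^k)"
  shows "Fp A = Fp B"
proof -
  let ?N = "size A"
  have Q: "fps_nth (Qs A) j = fps_nth (Qs B) j" if "j \<le> ?N" for j
    using assms(2) that by (auto simp: Qs_def)
  have C: "n \<le> ?N \<longrightarrow> coeff (Fp A) n = coeff (Fp B) n" for n
  proof (induction n rule: less_induct)
    case (less n)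
    show ?case
    proof (cases n)
      case 0 then show ?thesis by (simp add: coeff0_Fp)
    next
      case (Suc n')
      show ?thesis
      proof
        assume n: "n \<le> ?N"
        have "(\<Sum>i=0..n. coeff (Fp A) i * fps_nth (Qs A) (n-i)) = (\<Sum>i=0..n. coeff (Fp B) i * fps_nth (Qs B) (n-i))"
        proof (rule sum.cong[OF refl])
          fix i assume i: "i \<in> {0..n}"
          show "coeff (Fp A) i * fps_nth (Qs A) (n-i) = coeff (Fp B) i * fps_nth (Qs B) (n-i)"
          proof (cases "i = n")
            case True then show ?thesis by (simp add: Qs_def)
          next
            case False
            then have "i < n" using i by simp
            then show ?thesis using less.IH[of i] n Q[of "n-i"] by simp
          qed
        qed
        then have "of_nat n * coeff (Fp A) n = of_nat n * coeff (Fp B) n"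
          by (simp only: newton_coeff)
        then show "coeff (Fp A) n = coeff (Fp B) n" using Suc by simp
      qed
    qed
  qed
  show ?thesis
  proof (rule poly_eqI)
    fix n show "coeff (Fp A) n = coeff (Fp B) n"
    proof (cases "n \<le> ?N")
      case True then show ?thesis using C by simp
    next
      case False
      then have "coeff (Fp A) n = 0" "coeff (Fp B) n = 0"
        using degree_Fp[of A] degree_Fp[of B] assms(1) by (auto intro!: coeff_eq_0)
      then show ?thesis by simp
    qed
  qed
qed

lemma poly_Fp: "poly (Fp A) x = (\<Prod>a\<in>#A. 1 - x * a)"
  by (simp add: Fp_def poly_prod_mset)

lemma Fp_root: assumes "a \<noteq> 0" "poly (Fp B) (1/a) = 0" shows "a \<in># B"
proof -
  have "(\<Prod>b\<in>#B. 1 - (1/a) * b) = 0" using assms(2) by (simp only: poly_Fp)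
  then obtain b where b: "b \<in># B" "1 - (1/a) * b = 0" by (auto simp: prod_mset_zero_iff)
  then have "b = a" using assms(1) by (simp add: field_simps)
  then show ?thesis using b by simp
qed

lemma Fp_nz_inj:
  assumes "\<forall>a\<in>#A. a \<noteq> 0" "\<forall>b\<in>#B. b \<noteq> 0" "Fp A = Fp B"
  shows "A = B"
  using assms
proof (induction A arbitrary: B)
  case empty
  show ?case
  proof (rule ccontr)
    assume "{#} \<noteq> B"
    then obtain b where b: "b \<in># B" by (metis multiset_nonemptyE)
    then have "b \<noteq> 0" using empty.prems by auto
    moreover have "poly (Fp B) (1/b) = 1"
    proof -
      have "Fp B = Fp {#}" using empty.prems(3) by (rule sym)
      also have "Fp {#} = 1" by (simp add: Fp_def)
      finally show ?thesis by simp
    qed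
    moreover have "poly (Fp B) (1/b) = 0"
    proof -
      have "1 - (1/b) * b \<in># image_mset (\<lambda>a. 1 - (1/b) * a) B" unfolding set_image_mset using b by (rule imageI)
      moreover have "1 - (1/b) * b = 0" using \<open>b \<noteq> 0\<close> by simp
      ultimately have "(\<Prod>a\<in>#B. 1 - (1/b) * a) = 0" by (simp only: prod_mset_zero_iff)
      then show ?thesis by (simp only: poly_Fp)
    qed
    ultimately show False by simp
  qed
next
  case (add a A)
  have a0: "a \<noteq> 0" using add.prems by simp
  have "poly (Fp (add_mset a A)) (1/a) = 0" using a0 by (simp add: Fp_def)
  then have "poly (Fp B) (1/a) = 0" using add.prems by simp
  then have aB: "a \<in># B" using Fp_root a0 by blast
  define B' where "B' = B - {#a#}"
  have BB: "B = add_mset a B'" using aB by (simp add: B'_def)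
  have "[:1, -a:] * Fp A = [:1, -a:] * Fp B'" using add.prems(3) by (simp add: BB Fp_def)
  moreover have nz: "[:1, -a:] \<noteq> (0::real poly)" by simp
  ultimately have "Fp A = Fp B'" using mult_left_cancel[OF nz] by blast
  moreover have "\<forall>b\<in>#B'. b \<noteq> 0" using add.prems(2) unfolding BB by simp
  moreover have "\<forall>x\<in>#A. x \<noteq> 0" using add.prems(1) by simp
  ultimately have "A = B'" using add.IH by blast
  then show ?case using BB by simp
qed

lemma Fp_filter: "Fp A = Fp (filter_mset (\<lambda>x. x \<noteq> 0) A)"
  by (induction A) (simp_all add: Fp_def)

lemma mset_eq_from_power_sums:
  fixes A B :: "real multiset"
  assumes "size A = size B" and "\<forall>k\<in>{1..size A}. (\<Sum>a\<in>#A. a^k) = (\<Sum>b\<in>#B. b^k)"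
  shows "A = B"
proof -
  have "Fp A = Fp B" by (rule Fp_eq_from_power_sums[OF assms])
  then have F: "filter_mset (\<lambda>x. x \<noteq> 0) A = filter_mset (\<lambda>x. x \<noteq> 0) B"
    by (intro Fp_nz_inj) (auto simp: Fp_filter[symmetric])
  have pA: "A = filter_mset (\<lambda>x. x \<noteq> 0) A + replicate_mset (count A 0) 0"
  proof -
    have r: "filter_mset (\<lambda>x. \<not> x \<noteq> 0) A = replicate_mset (count A 0) 0"
      unfolding not_not by (rule filter_eq_replicate_mset)
    show ?thesis using multiset_partition[of A "\<lambda>x. x \<noteq> 0"] unfolding r .
  qed
  have pB: "B = filter_mset (\<lambda>x. x \<noteq> 0) B + replicate_mset (count B 0) 0"
  proof -
    have r: "filter_mset (\<lambda>x. \<not> x \<noteq> 0) B = replicate_mset (count B 0) 0"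
      unfolding not_not by (rule filter_eq_replicate_mset)
    show ?thesis using multiset_partition[of B "\<lambda>x. x \<noteq> 0"] unfolding r .
  qed
  have "size A = size (filter_mset (\<lambda>x. x \<noteq> 0) A) + count A 0"
    using arg_cong[OF pA, of size] by (simp only: size_union size_replicate_mset)
  moreover have "size B = size (filter_mset (\<lambda>x. x \<noteq> 0) B) + count B 0"
    using arg_cong[OF pB, of size] by (simp only: size_union size_replicate_mset)
  ultimately have "count A 0 = count B 0" using F assms(1) by simp
  then have cnt: "count A 0 = count B 0" .
  have "A = filter_mset (\<lambda>x. x \<noteq> 0) A + replicate_mset (count A 0) 0" by (rule pA)
  also have "\<dots> = filter_mset (\<lambda>x. x \<noteq> 0) B + replicate_mset (count B 0) 0" by (simp only: F cnt)
  also have "\<dots> = B" by (rule pB[symmetric])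
  finally show ?thesis .
qed




definition Om :: "'a set pmf \<Rightarrow> nat \<Rightarrow> (nat \<Rightarrow> 'a set) pmf" where
  "Om \<nu> k = Pi_pmf {1..k} {} (\<lambda>_. \<nu>)"
definition Nf :: "nat \<Rightarrow> (nat \<Rightarrow> 'a set) \<Rightarrow> nat" where
  "Nf k S = card (\<Inter>i\<in>{1..k}. S i)"
definition Dd :: "'a set pmf \<Rightarrow> nat \<Rightarrow> nat pmf" where
  "Dd \<nu> k = map_pmf (Nf k) (Om \<nu> k)"

lemma set_Om: "set_pmf (Om \<nu> k) = PiE_dflt {1..k} {} (\<lambda>_. set_pmf \<nu>)"
  by (simp add: Om_def set_Pi_pmf o_def)

lemma finite_Om:
  assumes "finite M" "set_pmf \<nu> \<subseteq> Pow M"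
  shows "finite (set_pmf (Om \<nu> k))"
proof -
  have "finite (set_pmf \<nu>)" using assms by (meson finite_Pow_iff finite_subset)
  then show ?thesis unfolding set_Om by (intro finite_PiE_dflt) auto
qed

lemma Inter_sub:
  assumes "set_pmf \<nu> \<subseteq> Pow M" "k \<ge> 1" "S \<in> set_pmf (Om \<nu> k)"
  shows "(\<Inter>i\<in>{1..k}. S i) \<subseteq> M"
proof -
  have "S 1 \<in> set_pmf \<nu>" using assms by (auto simp: set_Om PiE_dflt_def)
  then have "S 1 \<subseteq> M" using assms(1) by auto
  moreover have "(\<Inter>i\<in>{1..k}. S i) \<subseteq> S 1" using assms(2) by auto
  ultimately show ?thesis by blast
qed

lemma set_Dd:
  assumes "finite M" "set_pmf \<nu> \<subseteq> Pow M" "k \<ge> 1"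
  shows "set_pmf (Dd \<nu> k) \<subseteq> {0..card M}"
proof
  fix i assume "i \<in> set_pmf (Dd \<nu> k)"
  then obtain S where S: "S \<in> set_pmf (Om \<nu> k)" "i = Nf k S" by (auto simp: Dd_def)
  have "card (\<Inter>i\<in>{1..k}. S i) \<le> card M"
    using Inter_sub[OF assms(2,3) S(1)] assms(1) by (rule card_mono[rotated])
  then show "i \<in> {0..card M}" using S by (simp add: Nf_def)
qed

lemma PrF_Dd:
  assumes "finite M" "set_pmf \<nu> \<subseteq> Pow M" "k \<ge> 1"
  shows "PrF \<nu> k l = (\<Sum>i\<in>{l..card M}. pmf (Dd \<nu> k) i)"
proof -
  have "PrF \<nu> k l = measure_pmf.prob (Dd \<nu> k) {i. l \<le> i}"
    by (simp add: PrF_def Dd_def Om_def Nf_def vimage_def)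
  also have "\<dots> = measure_pmf.prob (Dd \<nu> k) ({i. l \<le> i} \<inter> set_pmf (Dd \<nu> k))"
    by (simp add: measure_Int_set_pmf)
  also have "{i. l \<le> i} \<inter> set_pmf (Dd \<nu> k) = {l..card M} \<inter> set_pmf (Dd \<nu> k)"
    using set_Dd[OF assms] by auto
  also have "measure_pmf.prob (Dd \<nu> k) \<dots> = measure_pmf.prob (Dd \<nu> k) {l..card M}"
    by (simp add: measure_Int_set_pmf)
  also have "\<dots> = (\<Sum>i\<in>{l..card M}. pmf (Dd \<nu> k) i)"
    by (simp add: measure_measure_pmf_finite)
  finally show ?thesis .
qed

lemma E_Dd:
  assumes "finite M" "set_pmf \<nu> \<subseteq> Pow M" "k \<ge> 1"
  shows "measure_pmf.expectation (Dd \<nu> k) (\<lambda>i. real (i choose j)) = (\<Sum>i=0..card M. real (i choose j) * pmf (Dd \<nu> k) i)"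
  by (rule integral_measure_pmf_real) (use set_Dd[OF assms] in auto)

lemma up_mass_alt:
  assumes "set_pmf \<nu> \<subseteq> Pow M"
  shows "up_mass M \<nu> X = measure_pmf.prob \<nu> {Y. X \<subseteq> Y}"
proof -
  have "{Y. Y \<subseteq> M \<and> X \<subseteq> Y} \<inter> set_pmf \<nu> = {Y. X \<subseteq> Y} \<inter> set_pmf \<nu>" using assms by auto
  then show ?thesis unfolding up_mass_def by (metis measure_Int_set_pmf)
qed

lemma E_Dd_up:
  assumes "finite M" "set_pmf \<nu> \<subseteq> Pow M" "k \<ge> 1"
  shows "measure_pmf.expectation (Dd \<nu> k) (\<lambda>i. real (i choose j)) = (\<Sum>X\<in>level_sets M j. (up_mass M \<nu> X)^k)"
proof -
  let ?L = "level_sets M j"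
  have finL: "finite ?L" using assms(1) by (simp add: level_sets_def)
  have "measure_pmf.expectation (Dd \<nu> k) (\<lambda>i. real (i choose j)) =
        measure_pmf.expectation (Om \<nu> k) (\<lambda>S. real (Nf k S choose j))"
    by (simp add: Dd_def)
  also have "\<dots> = measure_pmf.expectation (Om \<nu> k) (\<lambda>S. \<Sum>X\<in>?L. indicator {S. \<forall>i\<in>{1..k}. X \<subseteq> S i} S)"
  proof (rule integral_cong_AE)
    show "AE S in measure_pmf (Om \<nu> k). real (Nf k S choose j) = (\<Sum>X\<in>?L. indicator {S. \<forall>i\<in>{1..k}. X \<subseteq> S i} S)"
    proof (rule AE_pmfI)
      fix S assume S: "S \<in> set_pmf (Om \<nu> k)"
      define T where "T = (\<Inter>i\<in>{1..k}. S i)"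
      have TM: "T \<subseteq> M" using Inter_sub[OF assms(2,3) S] by (simp add: T_def)
      have finT: "finite T" using TM assms(1) finite_subset by blast
      have "(\<Sum>X\<in>?L. indicator {S. \<forall>i\<in>{1..k}. X \<subseteq> S i} S :: real) = (\<Sum>X\<in>?L. if X \<subseteq> T then 1 else 0)"
        by (intro sum.cong) (auto simp: T_def indicator_def)
      also have "\<dots> = real (card (?L \<inter> {X. X \<subseteq> T}))"
        by (simp add: sum.If_cases finL)
      also have "?L \<inter> {X. X \<subseteq> T} = {X. X \<subseteq> T \<and> card X = j}"
        using TM by (auto simp: level_sets_def)
      also have "card \<dots> = card T choose j" by (rule n_subsets[OF finT])
      finally show "real (Nf k S choose j) = (\<Sum>X\<in>?L. indicator {S. \<forall>i\<in>{1..k}. X \<subseteq> S i} S)"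
        by (simp add: Nf_def T_def)
    qed
  qed auto
  also have "\<dots> = (\<Sum>X\<in>?L. measure_pmf.expectation (Om \<nu> k) (indicator {S. \<forall>i\<in>{1..k}. X \<subseteq> S i}))"
    by (rule Bochner_Integration.integral_sum) (auto intro: integrable_measure_pmf_finite finite_Om[OF assms(1,2)])
  also have "\<dots> = (\<Sum>X\<in>?L. measure_pmf.prob (Om \<nu> k) (Pi {1..k} (\<lambda>_. {Y. X \<subseteq> Y})))"
  proof (intro sum.cong refl)
    fix X :: "'a set"
    have e: "{S. \<forall>i\<in>{1..k}. X \<subseteq> S i} = Pi {1..k} (\<lambda>_. {Y. X \<subseteq> Y})" by (auto simp: Pi_def)
    show "measure_pmf.expectation (Om \<nu> k) (indicator {S. \<forall>i\<in>{1..k}. X \<subseteq> S i} :: _ \<Rightarrow> real) = measure_pmf.prob (Om \<nu> k) (Pi {1..k} (\<lambda>_. {Y. X \<subseteq> Y}))"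
      unfolding e by simp
  qed
  also have "\<dots> = (\<Sum>X\<in>?L. (up_mass M \<nu> X)^k)"
    by (intro sum.cong refl) (simp add: Om_def measure_Pi_pmf_Pi up_mass_alt[OF assms(2)])
  finally show ?thesis .
qed




lemma tri:
  fixes p q :: "nat \<Rightarrow> real"
  assumes E: "\<forall>j\<in>{l<..m}. (\<Sum>i=0..m. real (i choose j) * p i) = (\<Sum>i=0..m. real (i choose j) * q i)"
    and P: "(\<Sum>i\<in>{l..m}. p i) = (\<Sum>i\<in>{l..m}. q i)" and lm: "l \<le> m"
  shows "(\<Sum>i=0..m. real (i choose l) * p i) = (\<Sum>i=0..m. real (i choose l) * q i)"
proof -
  define d where "d i = p i - q i" for i
  have E': "(\<Sum>i=0..m. real (i choose j) * d i) = 0" if "j \<in> {l<..m}" for j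
    using E that by (simp add: d_def algebra_simps sum_subtractf)
  have Z: "l < i \<and> i \<le> m \<longrightarrow> d i = 0" for i
  proof (induction "m - i" arbitrary: i rule: less_induct)
    case less
    show ?case
    proof
      assume i: "l < i \<and> i \<le> m"
      have "(\<Sum>i'=0..m. real (i' choose i) * d i') = (\<Sum>i'=0..m. if i' = i then d i else 0)"
      proof (rule sum.cong[OF refl])
        fix i' assume i': "i' \<in> {0..m}"
        show "real (i' choose i) * d i' = (if i' = i then d i else 0)"
        proof (cases "i' < i")
          case True then show ?thesis by simp
        next
          case False
          show ?thesis
          proof (cases "i' = i")
            case True then show ?thesis by simp
          next
            case False2: False
            then have "i < i'" using False by simp
            then have "d i' = 0" using less.hyps[of i'] i i' by auto
            then show ?thesis using False2 by simp
          qed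
        qed
      qed
      also have "\<dots> = d i" using i by simp
      finally show "d i = 0" using E'[of i] i by simp
    qed
  qed
  have "(\<Sum>i\<in>{l..m}. d i) = 0" using P by (simp add: d_def sum_subtractf)
  moreover have "(\<Sum>i\<in>{l..m}. d i) = (\<Sum>i\<in>{l..m}. if i = l then d l else 0)"
    by (rule sum.cong[OF refl]) (use Z in auto)
  ultimately have dl: "d l = 0" using lm by simp
  have "(\<Sum>i=0..m. real (i choose l) * d i) = 0"
  proof (rule sum.neutral, rule ballI)
    fix i assume "i \<in> {0..m}"
    then show "real (i choose l) * d i = 0" using Z[of i] dl
      by (cases "i < l") auto
  qed
  then show ?thesis by (simp add: d_def algebra_simps sum_subtractf)
qed

lemma card_level_sets: "finite M \<Longrightarrow> card (level_sets M l) = card M choose l"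
  by (simp add: level_sets_def n_subsets)

lemma level_sets_empty: "finite M \<Longrightarrow> card M < l \<Longrightarrow> level_sets M l = {}"
  by (auto simp: level_sets_def dest: card_mono)

definition PS where "PS M \<nu> l k = (\<Sum>X\<in>level_sets M l. (up_mass M \<nu> X)^k)"

lemma exact_ps:
  assumes M: "finite M" and mu: "set_pmf \<mu> \<subseteq> Pow M" and nu: "set_pmf \<nu> \<subseteq> Pow M"
    and H: "\<forall>l\<in>{0..card M}. \<forall>k\<in>{1..card M choose l}. PrF \<mu> k l = PrF \<nu> k l"
  shows "\<forall>k\<ge>1. PS M \<mu> l k = PS M \<nu> l k"
proof (induction "card M - l" arbitrary: l rule: less_induct)
  case less
  show ?case
  proof (cases "l \<le> card M")
    case False
    then show ?thesis using level_sets_empty[OF M, of l] by (simp add: PS_def)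
  next
    case lm: True
    let ?L = "level_sets M l"
    let ?A = "image_mset (up_mass M \<mu>) (mset_set ?L)"
    let ?B = "image_mset (up_mass M \<nu>) (mset_set ?L)"
    have finL: "finite ?L" using M by (simp add: level_sets_def)
    have ps: "(\<Sum>a\<in>#image_mset (up_mass M \<rho>) (mset_set ?L). a^k) = PS M \<rho> l k" for \<rho> k
      by (simp add: PS_def sum_unfold_sum_mset image_mset.compositionality o_def)
    have small: "PS M \<mu> l k = PS M \<nu> l k" if k: "k \<in> {1..card M choose l}" for k
    proof -
      have k1: "k \<ge> 1" using k by simp
      have E: "\<forall>j\<in>{l<..card M}. (\<Sum>i=0..card M. real (i choose j) * pmf (Dd \<mu> k) i) = (\<Sum>i=0..card M. real (i choose j) * pmf (Dd \<nu> k) i)"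
      proof
        fix j assume j: "j \<in> {l<..card M}"
        have "PS M \<mu> j k = PS M \<nu> j k" using less.hyps[of j] j k1 by auto
        then show "(\<Sum>i=0..card M. real (i choose j) * pmf (Dd \<mu> k) i) = (\<Sum>i=0..card M. real (i choose j) * pmf (Dd \<nu> k) i)"
          using E_Dd[OF M mu k1, of j] E_Dd[OF M nu k1, of j] E_Dd_up[OF M mu k1, of j] E_Dd_up[OF M nu k1, of j]
          by (simp add: PS_def)
      qed
      have P: "(\<Sum>i\<in>{l..card M}. pmf (Dd \<mu> k) i) = (\<Sum>i\<in>{l..card M}. pmf (Dd \<nu> k) i)"
        using H lm k PrF_Dd[OF M mu k1, of l] PrF_Dd[OF M nu k1, of l] by auto
      have "(\<Sum>i=0..card M. real (i choose l) * pmf (Dd \<mu> k) i) = (\<Sum>i=0..card M. real (i choose l) * pmf (Dd \<nu> k) i)"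
        by (rule tri[OF E P lm])
      then show ?thesis
        using E_Dd[OF M mu k1, of l] E_Dd[OF M nu k1, of l] E_Dd_up[OF M mu k1, of l] E_Dd_up[OF M nu k1, of l]
        by (simp add: PS_def)
    qed
    have "?A = ?B"
    proof (rule mset_eq_from_power_sums)
      show "size ?A = size ?B" by simp
      show "\<forall>k\<in>{1..size ?A}. (\<Sum>a\<in>#?A. a^k) = (\<Sum>b\<in>#?B. b^k)"
        using small by (simp add: ps card_level_sets[OF M])
    qed
    then show ?thesis using ps by metis
  qed
qed

lemma exact_mset:
  assumes M: "finite M" and mu: "set_pmf \<mu> \<subseteq> Pow M" and nu: "set_pmf \<nu> \<subseteq> Pow M"
    and H: "\<forall>l\<in>{0..card M}. \<forall>k\<in>{1..card M choose l}. PrF \<mu> k l = PrF \<nu> k l"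
  shows "image_mset (up_mass M \<mu>) (mset_set (level_sets M l)) = image_mset (up_mass M \<nu>) (mset_set (level_sets M l))"
proof (rule mset_eq_from_power_sums)
  show "size (image_mset (up_mass M \<mu>) (mset_set (level_sets M l))) = size (image_mset (up_mass M \<nu>) (mset_set (level_sets M l)))" by simp
  have ps: "(\<Sum>a\<in>#image_mset (up_mass M \<rho>) (mset_set (level_sets M l)). a^k) = PS M \<rho> l k" for \<rho> k
    by (simp add: PS_def sum_unfold_sum_mset image_mset.compositionality o_def)
  show "\<forall>k\<in>{1..size (image_mset (up_mass M \<mu>) (mset_set (level_sets M l)))}. (\<Sum>a\<in>#image_mset (up_mass M \<mu>) (mset_set (level_sets M l)). a^k) = (\<Sum>b\<in>#image_mset (up_mass M \<nu>) (mset_set (level_sets M l)). b^k)"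
    using exact_ps[OF M mu nu H, of l] by (simp add: ps)
qed

lemma mset_match:
  assumes "finite L1" "finite L2" "image_mset f (mset_set L1) = image_mset g (mset_set L2)"
  shows "\<exists>\<pi>. bij_betw \<pi> L1 L2 \<and> (\<forall>x\<in>L1. f x = g (\<pi> x))"
  using assms
proof (induction L1 arbitrary: L2 rule: finite_induct)
  case empty
  then have "L2 = {}" by (metis image_mset_is_empty_iff mset_set_empty_iff)
  then show ?case by (auto intro!: exI[of _ id] simp: bij_betw_def)
next
  case (insert x L1)
  have "f x \<in># image_mset f (mset_set (insert x L1))" using insert.hyps by simp
  then have "f x \<in># image_mset g (mset_set L2)" unfolding insert.prems(2) .
  then obtain y where y: "y \<in> L2" "g y = f x" using insert.prems(1) by auto
  have m2: "mset_set L2 = add_mset y (mset_set (L2 - {y}))"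
    using y insert.prems(1) by (metis mset_set.remove)
  have "image_mset f (mset_set L1) = image_mset g (mset_set (L2 - {y}))"
    using insert.prems(2) insert.hyps y by (simp add: m2)
  then obtain \<pi> where \<pi>: "bij_betw \<pi> L1 (L2 - {y})" "\<forall>x\<in>L1. f x = g (\<pi> x)"
    using insert.IH[of "L2 - {y}"] insert.prems(1) by auto
  define \<pi>' where "\<pi>' = \<pi>(x := y)"
  have "bij_betw \<pi>' L1 (L2 - {y})"
    using \<pi>(1) insert.hyps(2) by (subst bij_betw_cong[of L1 \<pi>' \<pi>]) (auto simp: \<pi>'_def)
  then have "bij_betw \<pi>' (L1 \<union> {x}) ((L2 - {y}) \<union> {\<pi>' x})"
    by (intro notIn_Un_bij_betw) (auto simp: \<pi>'_def insert.hyps)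
  moreover have "(L2 - {y}) \<union> {\<pi>' x} = L2" using y by (auto simp: \<pi>'_def)
  ultimately have "bij_betw \<pi>' (insert x L1) L2" by simp
  moreover have "\<forall>z\<in>insert x L1. f z = g (\<pi>' z)"
    using \<pi>(2) y insert.hyps(2) by (auto simp: \<pi>'_def)
  ultimately show ?case by blast
qed




lemma meas_sub:
  assumes "set_pmf p \<subseteq> A"
  shows "measure_pmf.prob p E = measure_pmf.prob p (E \<inter> A)"
proof -
  have "measure_pmf.prob p E = measure_pmf.prob p (E \<inter> set_pmf p)" by (simp add: measure_Int_set_pmf)
  also have "E \<inter> set_pmf p = (E \<inter> A) \<inter> set_pmf p" using assms by auto
  also have "measure_pmf.prob p \<dots> = measure_pmf.prob p (E \<inter> A)" by (simp add: measure_Int_set_pmf)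
  finally show ?thesis .
qed

lemma up_mass_sum:
  assumes "finite M"
  shows "up_mass M \<rho> X = (\<Sum>Y\<in>{Y. Y \<subseteq> M \<and> X \<subseteq> Y}. pmf \<rho> Y)"
proof -
  have "finite {Y. Y \<subseteq> M \<and> X \<subseteq> Y}" by (rule finite_subset[of _ "Pow M"]) (use assms in auto)
  then show ?thesis unfolding up_mass_def by (rule measure_measure_pmf_finite)
qed

lemma PrF_sum:
  assumes M: "finite M" and sub: "set_pmf \<rho> \<subseteq> Pow M"
  shows "PrF \<rho> k l = (\<Sum>S\<in>{S. l \<le> card (\<Inter>i\<in>{1..k}. S i)} \<inter> PiE_dflt {1..k} {} (\<lambda>_. Pow M). \<Prod>i\<in>{1..k}. pmf \<rho> (S i))"
proof -
  let ?O = "PiE_dflt {1..k} {} (\<lambda>_. Pow M)"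
  have finO: "finite ?O" using M by (intro finite_PiE_dflt) auto
  have "set_pmf (Pi_pmf {1..k} {} (\<lambda>_. \<rho>)) \<subseteq> ?O"
    using set_Pi_pmf_subset'[of "{1..k}" "{}" "\<lambda>_. \<rho>"] sub by (auto simp: PiE_dflt_def)
  then have "PrF \<rho> k l = measure_pmf.prob (Pi_pmf {1..k} {} (\<lambda>_. \<rho>)) ({S. l \<le> card (\<Inter>i\<in>{1..k}. S i)} \<inter> ?O)"
    unfolding PrF_def by (rule meas_sub)
  also have "\<dots> = (\<Sum>S\<in>{S. l \<le> card (\<Inter>i\<in>{1..k}. S i)} \<inter> ?O. pmf (Pi_pmf {1..k} {} (\<lambda>_. \<rho>)) S)"
    using finO by (intro measure_measure_pmf_finite) auto
  also have "\<dots> = (\<Sum>S\<in>{S. l \<le> card (\<Inter>i\<in>{1..k}. S i)} \<inter> ?O. \<Prod>i\<in>{1..k}. pmf \<rho> (S i))"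
    by (intro sum.cong refl pmf_Pi') (auto simp: PiE_dflt_def)
  finally show ?thesis .
qed

lemma cont_up:
  assumes "finite M" "\<And>X. (\<lambda>n. pmf (\<rho> n) X) \<longlonglongrightarrow> pmf \<rho>0 X"
  shows "(\<lambda>n. up_mass M (\<rho> n) X) \<longlonglongrightarrow> up_mass M \<rho>0 X"
  unfolding up_mass_sum[OF assms(1)] by (intro tendsto_sum assms(2))

lemma cont_PrF:
  assumes M: "finite M" and "\<And>n. set_pmf (\<rho> n) \<subseteq> Pow M" "set_pmf \<rho>0 \<subseteq> Pow M"
    "\<And>X. (\<lambda>n. pmf (\<rho> n) X) \<longlonglongrightarrow> pmf \<rho>0 X"
  shows "(\<lambda>n. PrF (\<rho> n) k l) \<longlonglongrightarrow> PrF \<rho>0 k l"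
  unfolding PrF_sum[OF M assms(2)] PrF_sum[OF M assms(3)]
  by (intro tendsto_sum tendsto_prod assms(4))

lemma subseq_finite:
  fixes f :: "nat \<Rightarrow> 'b \<Rightarrow> real"
  assumes "finite I" "\<And>n i. \<bar>f n i\<bar> \<le> B"
  shows "\<exists>r. strict_mono r \<and> (\<forall>i\<in>I. convergent (\<lambda>n. f (r n) i))"
  using assms(1)
proof (induction I rule: finite_induct)
  case empty
  show ?case by (rule exI[of _ id]) (simp add: strict_mono_def)
next
  case (insert a I)
  then obtain r where r: "strict_mono r" "\<forall>i\<in>I. convergent (\<lambda>n. f (r n) i)" by blast
  obtain t where t: "strict_mono t" "monoseq (\<lambda>n. f (r (t n)) a)"
    using seq_monosub[of "\<lambda>n. f (r n) a"] by blast
  have "Bseq (\<lambda>n. f (r (t n)) a)" by (rule BseqI'[of _ B]) (simp add: assms(2))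
  then have ca: "convergent (\<lambda>n. f (r (t n)) a)" using t(2) by (rule Bseq_monoseq_convergent)
  have "convergent (\<lambda>n. f (r (t n)) i)" if "i \<in> I" for i
    using convergent_subseq_convergent[OF r(2)[rule_format, OF that] t(1)] by (simp add: o_def)
  moreover have sm: "strict_mono (\<lambda>n. r (t n))" using strict_mono_o[OF r(1) t(1)] by (simp add: o_def)
  ultimately show ?case using ca by (intro exI[of _ "\<lambda>n. r (t n)"]) auto
qed




theorem lemma6:
  fixes M :: "'a set" and \<mu> :: "'a set pmf" and \<epsilon> :: real
  assumes "finite M" and "set_pmf \<mu> \<subseteq> Pow M" and "\<epsilon> > 0"
  shows "\<exists>\<delta>>0. \<forall>\<mu>' :: 'a set pmf. set_pmf \<mu>' \<subseteq> Pow M \<longrightarrow>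
           (\<forall>l\<in>{0..card M}. \<forall>k\<in>{1..card M choose l}. \<bar>PrF \<mu> k l - PrF \<mu>' k l\<bar> \<le> \<delta>) \<longrightarrow>
           (\<forall>l\<in>{0..card M}. \<exists>\<pi>. bij_betw \<pi> (level_sets M l) (level_sets M l) \<and>
              (\<forall>X\<in>level_sets M l. \<bar>up_mass M \<mu> X - up_mass M \<mu>' (\<pi> X)\<bar> \<le> \<epsilon>))"
proof (rule ccontr)
  let ?H = "\<lambda>\<delta> \<mu>'. set_pmf \<mu>' \<subseteq> Pow M \<and>
           (\<forall>l\<in>{0..card M}. \<forall>k\<in>{1..card M choose l}. \<bar>PrF \<mu> k l - PrF \<mu>' k l\<bar> \<le> \<delta>)"
  let ?C = "\<lambda>\<mu>'. (\<forall>l\<in>{0..card M}. \<exists>\<pi>. bij_betw \<pi> (level_sets M l) (level_sets M l) \<and>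
              (\<forall>X\<in>level_sets M l. \<bar>up_mass M \<mu> X - up_mass M \<mu>' (\<pi> X)\<bar> \<le> \<epsilon>))"
  assume "\<not> ?thesis"
  then have all: "\<forall>\<delta>>0. \<exists>\<mu>'. ?H \<delta> \<mu>' \<and> \<not> ?C \<mu>'" by blast
  have "\<forall>n::nat. \<exists>\<mu>'. ?H (1 / (real n + 1)) \<mu>' \<and> \<not> ?C \<mu>'"
  proof
    fix n :: nat
    have "1 / (real n + 1) > 0" by simp
    then show "\<exists>\<mu>'. ?H (1 / (real n + 1)) \<mu>' \<and> \<not> ?C \<mu>'" using all by blast
  qed
  from choice[OF this] obtain \<mu>s where \<mu>s0: "\<forall>n. ?H (1 / (real n + 1)) (\<mu>s n) \<and> \<not> ?C (\<mu>s n)" ..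
  have \<mu>sH: "?H (1 / (real n + 1)) (\<mu>s n)" for n using spec[OF \<mu>s0, of n] by (rule conjunct1)
  have \<mu>sC: "\<not> ?C (\<mu>s n)" for n using spec[OF \<mu>s0, of n] by (rule conjunct2)
  have subs0: "set_pmf (\<mu>s n) \<subseteq> Pow M" for n using \<mu>sH[of n] by (rule conjunct1)
  have bnd: "\<forall>l\<in>{0..card M}. \<forall>k\<in>{1..card M choose l}. \<bar>PrF \<mu> k l - PrF (\<mu>s n) k l\<bar> \<le> 1 / (real n + 1)" for n
    using \<mu>sH[of n] by (rule conjunct2)
  have M: "finite M" by fact
  have finP: "finite (Pow M)" using M by simp
  obtain r where r: "strict_mono r" "\<forall>X\<in>Pow M. convergent (\<lambda>n. pmf (\<mu>s (r n)) X)"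
    using subseq_finite[OF finP, of "\<lambda>n X. pmf (\<mu>s n) X" 1] by (auto simp: pmf_le_1)
  define w where "w X = (if X \<in> Pow M then lim (\<lambda>n. pmf (\<mu>s (r n)) X) else 0)" for X
  have wlim: "(\<lambda>n. pmf (\<mu>s (r n)) X) \<longlonglongrightarrow> w X" for X
  proof (cases "X \<in> Pow M")
    case True
    then show ?thesis using r(2) by (simp add: w_def convergent_LIMSEQ_iff)
  next
    case False
    then have "X \<notin> set_pmf (\<mu>s (r n))" for n using subs0[of "r n"] by blast
    then have "pmf (\<mu>s (r n)) X = 0" for n by (simp add: set_pmf_eq)
    then show ?thesis using False by (simp add: w_def)
  qed
  have wnn: "0 \<le> w X" for X
    by (rule LIMSEQ_le_const[OF wlim]) simp
  have sum1: "(\<Sum>X\<in>Pow M. w X) = 1"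
  proof -
    have "(\<lambda>n. \<Sum>X\<in>Pow M. pmf (\<mu>s (r n)) X) \<longlonglongrightarrow> (\<Sum>X\<in>Pow M. w X)"
      by (intro tendsto_sum wlim)
    moreover have "(\<Sum>X\<in>Pow M. pmf (\<mu>s (r n)) X) = 1" for n
      using subs0[of "r n"] finP by (intro sum_pmf_eq_1) auto
    then have "(\<lambda>n. \<Sum>X\<in>Pow M. pmf (\<mu>s (r n)) X) = (\<lambda>n. 1)" by (rule ext)
    ultimately have "(\<lambda>n. 1::real) \<longlonglongrightarrow> (\<Sum>X\<in>Pow M. w X)" by simp
    then show ?thesis using LIMSEQ_unique[OF tendsto_const] by metis
  qed
  have int1: "(\<integral>\<^sup>+X. ennreal (w X) \<partial>count_space UNIV) = 1"
  proof -
    have "(\<integral>\<^sup>+X. ennreal (w X) \<partial>count_space UNIV) = (\<Sum>X\<in>Pow M. ennreal (w X))"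
      using finP by (intro nn_integral_count_space') (auto simp: w_def)
    also have "\<dots> = ennreal (\<Sum>X\<in>Pow M. w X)" using wnn by simp
    finally show ?thesis using sum1 by simp
  qed
  define \<mu>0 where "\<mu>0 = embed_pmf w"
  have pmf0: "pmf \<mu>0 X = w X" for X
    unfolding \<mu>0_def using wnn int1 by (rule pmf_embed_pmf)
  have set0: "set_pmf \<mu>0 \<subseteq> Pow M"
    using pmf0 by (auto simp: set_pmf_eq w_def)
  have conv: "(\<lambda>n. pmf (\<mu>s (r n)) X) \<longlonglongrightarrow> pmf \<mu>0 X" for X
    using wlim pmf0 by simp
  have subs: "set_pmf (\<mu>s (r n)) \<subseteq> Pow M" for n by (rule subs0)
  have eqPrF: "\<forall>l\<in>{0..card M}. \<forall>k\<in>{1..card M choose l}. PrF \<mu> k l = PrF \<mu>0 k l"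
  proof (intro ballI)
    fix l k assume l: "l \<in> {0..card M}" and k: "k \<in> {1..card M choose l}"
    have t0: "(\<lambda>n. PrF (\<mu>s (r n)) k l) \<longlonglongrightarrow> PrF \<mu>0 k l"
      by (rule cont_PrF[OF M subs set0 conv])
    have g0: "(\<lambda>n. 1 / (real n + 1)) \<longlonglongrightarrow> 0"
      using LIMSEQ_inverse_real_of_nat by (simp add: inverse_eq_divide add.commute)
    have "(\<lambda>n. PrF (\<mu>s (r n)) k l - PrF \<mu> k l) \<longlonglongrightarrow> 0"
    proof (rule Lim_null_comparison[OF _ g0])
      show "\<forall>\<^sub>F n in sequentially. norm (PrF (\<mu>s (r n)) k l - PrF \<mu> k l) \<le> 1 / (real n + 1)"
      proof (rule always_eventually, rule allI)
        fix n
        have "\<bar>PrF \<mu> k l - PrF (\<mu>s (r n)) k l\<bar> \<le> 1 / (real (r n) + 1)"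
          using bnd[of "r n"] l k by blast
        also have "\<dots> \<le> 1 / (real n + 1)"
          using seq_suble[OF r(1), of n] by (intro divide_left_mono) auto
        finally show "norm (PrF (\<mu>s (r n)) k l - PrF \<mu> k l) \<le> 1 / (real n + 1)" by simp
      qed
    qed
    then have "(\<lambda>n. PrF (\<mu>s (r n)) k l) \<longlonglongrightarrow> PrF \<mu> k l" by (simp add: LIM_zero_iff)
    then show "PrF \<mu> k l = PrF \<mu>0 k l" using t0 LIMSEQ_unique by blast
  qed
  have "\<forall>l. \<exists>\<pi>. bij_betw \<pi> (level_sets M l) (level_sets M l) \<and> (\<forall>X\<in>level_sets M l. up_mass M \<mu> X = up_mass M \<mu>0 (\<pi> X))"
  proof
    fix l
    have fl: "finite (level_sets M l)" using M by (simp add: level_sets_def)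
    show "\<exists>\<pi>. bij_betw \<pi> (level_sets M l) (level_sets M l) \<and> (\<forall>X\<in>level_sets M l. up_mass M \<mu> X = up_mass M \<mu>0 (\<pi> X))"
      by (rule mset_match[OF fl fl exact_mset[OF M assms(2) set0 eqPrF]])
  qed
  from choice[OF this] obtain pis where pis0: "\<forall>l. bij_betw (pis l) (level_sets M l) (level_sets M l) \<and> (\<forall>X\<in>level_sets M l. up_mass M \<mu> X = up_mass M \<mu>0 (pis l X))" ..
  have pis1: "bij_betw (pis l) (level_sets M l) (level_sets M l)" for l using spec[OF pis0, of l] by (rule conjunct1)
  have pis2: "up_mass M \<mu> X = up_mass M \<mu>0 (pis l X)" if "X \<in> level_sets M l" for l X
    using spec[OF pis0, of l] that by blast
  have ev: "\<forall>\<^sub>F n in sequentially. \<forall>l\<in>{0..card M}. \<forall>X\<in>level_sets M l.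
              \<bar>up_mass M \<mu> X - up_mass M (\<mu>s (r n)) (pis l X)\<bar> \<le> \<epsilon>"
  proof (intro eventually_ball_finite ballI)
    fix l X assume X: "X \<in> level_sets M l"
    have "(\<lambda>n. up_mass M (\<mu>s (r n)) (pis l X)) \<longlonglongrightarrow> up_mass M \<mu>0 (pis l X)"
      by (rule cont_up[OF M conv])
    from tendstoD[OF this assms(3)]
    show "\<forall>\<^sub>F n in sequentially. \<bar>up_mass M \<mu> X - up_mass M (\<mu>s (r n)) (pis l X)\<bar> \<le> \<epsilon>"
      by eventually_elim (use pis2[OF X] in \<open>auto simp: dist_real_def\<close>)
  qed (auto simp: M level_sets_def)
  then obtain N where N: "\<forall>n\<ge>N. \<forall>l\<in>{0..card M}. \<forall>X\<in>level_sets M l.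
              \<bar>up_mass M \<mu> X - up_mass M (\<mu>s (r n)) (pis l X)\<bar> \<le> \<epsilon>"
    unfolding eventually_sequentially ..
  have PN: "\<forall>l\<in>{0..card M}. \<forall>X\<in>level_sets M l.
              \<bar>up_mass M \<mu> X - up_mass M (\<mu>s (r N)) (pis l X)\<bar> \<le> \<epsilon>"
    using mp[OF spec[OF N, of N] order_refl] .
  have "?C (\<mu>s (r N))"
  proof (intro ballI)
    fix l assume l: "l \<in> {0..card M}"
    show "\<exists>\<pi>. bij_betw \<pi> (level_sets M l) (level_sets M l) \<and>
              (\<forall>X\<in>level_sets M l. \<bar>up_mass M \<mu> X - up_mass M (\<mu>s (r N)) (\<pi> X)\<bar> \<le> \<epsilon>)"
      by (rule exI[of _ "pis l"], rule conjI[OF pis1], rule bspec[OF PN l])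
  qed
  then show False using \<mu>sC[of "r N"] by contradiction
qed


end
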